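(* Let $(D,\mathrm{left},\mathrm{right})$ be an interval domain and consider the poset $(\max(D),\le)$, with $\ll$, $\Downarrow$, $\Uparrow$, $\bigvee$, $\bigwedge$ computed in $(\max(D),\le)$. Then: (i) for every $x\in\max(D)$, the set $\Downarrow x$ is $\le$-directed with $\bigvee\Downarrow x=x$; (ii) for all $a,b\in\max(D)$: $a\ll b$ iff for every $\le$-filtered $S\subseteq\max(D)$ having an infimum, $\bigwedge S\le a$ implies $s\le b$ for some $s\in S$; (iii) for every $x\in\max(D)$, the set $\Uparrow x$ is $\le$-filtered with $\bigwedge\Uparrow x=x$. Thus $(\max(D),\le)$ is a bicontinuous poset.
   Context: For a poset $(P,\sqsubseteq)$: directed (resp. filtered) sets are nonempty sets in which any two elements have an upper (resp. lower) bound in the set; $\bigsqcup S$ is the supremum; $x\ll y$ iff for every directed $S\subseteq P$ with a supremum, $y\sqsubseteq\bigsqcup S$ implies $x\sqsubseteq s$ for some $s\in S$; $\Uparrow x=\{a: x\ll a\}$, $\Downarrow x=\{a:a\ll x\}$. $P$ is continuous if there is $B\subseteq P$ such that for each $x$, $B\cap\Downarrow x$ contains a directed set with supremum $x$. A continuous poset is bicontinuous if (1) $x\ll y$ iff for every filtered $S$ having an infimum, $\bigwedge S\sqsubseteq x$ implies $s\sqsubseteq y$ for some $s\in S$; and (2) each $\Uparrow x$ is filtered with infimum $x$. A continuous dcpo is a continuous poset in which every directed set has a supremum. $\max(P)$ is the set of maximal elements, $x\sqcap y$ the infimum of $\{x,y\}$. The Scott topology consists of upper sets $U$ such that $\bigsqcup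 S\in U$ implies $S\cap U\ne\emptyset$ for directed $S$. An interval poset is a poset $D$ with functions $\mathrm{left},\mathrm{right}:D\to\max(D)$ such that (only named infima are assumed to exist): (i) $x=\mathrm{left}(x)\sqcap\mathrm{right}(x)$ for all $x$; (ii) if $\mathrm{right}(x)=\mathrm{left}(y)$ then $\mathrm{left}(x\sqcap y)=\mathrm{left}(x)$ and $\mathrm{right}(x\sqcap y)=\mathrm{right}(y)$; (iii) for $p\in\max(D)$ with $x\sqsubseteq p$: $\mathrm{left}(\mathrm{left}(x)\sqcap p)=\mathrm{left}(x)$, $\mathrm{right}(\mathrm{left}(x)\sqcap p)=p$, $\mathrm{left}(p\sqcap\mathrm{right}(x))=p$, $\mathrm{right}(p\sqcap\mathrm{right}(x))=\mathrm{right}(x)$. On $\max(D)$ define $a\le b$ iff $a=\mathrm{left}(z)$, $b=\mathrm{right}(z)$ for some $z\in D$; this is a partial order. For $p,q\in\max(D)$ let $[p,\cdot]=\mathrm{left}^{-1}(p)$ and $[\cdot,q]=\mathrm{right}^{-1}(q)$, regarded as subposets of $D$. An interval domain is an interval poset $(D,\mathrm{left},\mathrm{right})$ such that $D$ is a continuous dcpo and: (i) if $p\in\Uparrow x\cap\max(D)$ then $\Uparrow(\mathrm{left}(x)\sqcap p)\ne\emptyset$ and $\Uparrow(p\sqcap\mathrm{right}(x))\ne\emptyset$; (ii) for all $x\in D$ the following are equivalent: (a) $\Uparrow x\ne\emptyset$; (b) for all $y\in[\mathrm{left}(x),\cdot]$ with $y\sqsubseteq x$, $y\ll\mathrm{right}(y)$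 in the poset $[\cdot,\mathrm{right}(y)]$; (c) for all $y\in[\cdot,\mathrm{right}(x)]$ with $y\sqsubseteq x$, $y\ll\mathrm{left}(y)$ in the poset $[\mathrm{left}(y),\cdot]$; (iii)(a) for every directed $S\subseteq[p,\cdot]$, $\mathrm{left}(\bigsqcup S)=p$ and $\mathrm{right}(\bigsqcup S)=\mathrm{right}(\bigsqcup T)$ for every directed $T\subseteq[q,\cdot]$ with $\mathrm{right}(T)=\mathrm{right}(S)$ (images); (iii)(b) for every directed $S\subseteq[\cdot,q]$, $\mathrm{right}(\bigsqcup S)=q$ and $\mathrm{left}(\bigsqcup S)=\mathrm{left}(\bigsqcup T)$ for every directed $T\subseteq[\cdot,p]$ with $\mathrm{left}(T)=\mathrm{left}(S)$; (iv) for all $x\in D$, $\{y\in\max(D): x\sqsubseteq y\}$ is compact in the relative Scott topology. *)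

theory Defs
  imports Main
begin

definition poset_on :: "'a set \<Rightarrow> ('a \<Rightarrow> 'a \<Rightarrow> bool) \<Rightarrow> bool" where
  "poset_on P le \<longleftrightarrow>
     (\<forall>x\<in>P. le x x) \<and>
     (\<forall>x\<in>P. \<forall>y\<in>P. le x y \<and> le y x \<longrightarrow> x = y) \<and>
     (\<forall>x\<in>P. \<forall>y\<in>P. \<forall>z\<in>P. le x y \<and> le y z \<longrightarrow> le x z)"

definition directed_in :: "'a set \<Rightarrow> ('a \<Rightarrow> 'a \<Rightarrow> bool) \<Rightarrow> 'a set \<Rightarrow> bool" where
  "directed_in P le S \<longleftrightarrow> S \<subseteq> P \<and> S \<noteq> {} \<and> (\<forall>x\<in>S. \<forall>y\<in>S. \<exists>z\<in>S. le x z \<and> le y z)"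

definition filtered_in :: "'a set \<Rightarrow> ('a \<Rightarrow> 'a \<Rightarrow> bool) \<Rightarrow> 'a set \<Rightarrow> bool" where
  "filtered_in P le S \<longleftrightarrow> S \<subseteq> P \<and> S \<noteq> {} \<and> (\<forall>x\<in>S. \<forall>y\<in>S. \<exists>z\<in>S. le z x \<and> le z y)"

definition is_sup_in :: "'a set \<Rightarrow> ('a \<Rightarrow> 'a \<Rightarrow> bool) \<Rightarrow> 'a set \<Rightarrow> 'a \<Rightarrow> bool" where
  "is_sup_in P le S s \<longleftrightarrow> s \<in> P \<and> (\<forall>x\<in>S. le x s) \<and> (\<forall>u\<in>P. (\<forall>x\<in>S. le x u) \<longrightarrow> le s u)"

definition is_inf_in :: "'a set \<Rightarrow> ('a \<Rightarrow> 'a \<Rightarrow> bool) \<Rightarrow> 'a set \<Rightarrow> 'a \<Rightarrow> bool" where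
  "is_inf_in P le S i \<longleftrightarrow> i \<in> P \<and> (\<forall>x\<in>S. le i x) \<and> (\<forall>u\<in>P. (\<forall>x\<in>S. le u x) \<longrightarrow> le u i)"

definition way_below_in :: "'a set \<Rightarrow> ('a \<Rightarrow> 'a \<Rightarrow> bool) \<Rightarrow> 'a \<Rightarrow> 'a \<Rightarrow> bool" where
  "way_below_in P le x y \<longleftrightarrow>
     (\<forall>S s. directed_in P le S \<and> is_sup_in P le S s \<and> le y s \<longrightarrow> (\<exists>t\<in>S. le x t))"

definition wb_up :: "'a set \<Rightarrow> ('a \<Rightarrow> 'a \<Rightarrow> bool) \<Rightarrow> 'a \<Rightarrow> 'a set" where
  "wb_up P le x = {a\<in>P. way_below_in P le x a}"

definition wb_down :: "'a set \<Rightarrow> ('a \<Rightarrow> 'a \<Rightarrow> bool) \<Rightarrow> 'a \<Rightarrow> 'a set" where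
  "wb_down P le x = {a\<in>P. way_below_in P le a x}"

definition continuous_poset :: "'a set \<Rightarrow> ('a \<Rightarrow> 'a \<Rightarrow> bool) \<Rightarrow> bool" where
  "continuous_poset P le \<longleftrightarrow> poset_on P le \<and>
     (\<exists>B\<subseteq>P. \<forall>x\<in>P. \<exists>S. S \<subseteq> B \<inter> wb_down P le x \<and> directed_in P le S \<and> is_sup_in P le S x)"

definition continuous_dcpo :: "'a set \<Rightarrow> ('a \<Rightarrow> 'a \<Rightarrow> bool) \<Rightarrow> bool" where
  "continuous_dcpo P le \<longleftrightarrow> continuous_poset P le \<and>
     (\<forall>S. directed_in P le S \<longrightarrow> (\<exists>s. is_sup_in P le S s))"

definition bicontinuous_poset :: "'a set \<Rightarrow> ('a \<Rightarrow> 'a \<Rightarrow> bool) \<Rightarrow> bool" where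
  "bicontinuous_poset P le \<longleftrightarrow> continuous_poset P le \<and>
     (\<forall>x\<in>P. \<forall>y\<in>P. way_below_in P le x y \<longleftrightarrow>
        (\<forall>S i. filtered_in P le S \<and> is_inf_in P le S i \<and> le i x \<longrightarrow> (\<exists>s\<in>S. le s y))) \<and>
     (\<forall>x\<in>P. filtered_in P le (wb_up P le x) \<and> is_inf_in P le (wb_up P le x) x)"

definition maxD :: "('a::order) set" where
  "maxD = {p. \<forall>y. p \<le> y \<longrightarrow> y = p}"

definition has_meet :: "'a::order \<Rightarrow> 'a \<Rightarrow> bool" where
  "has_meet x y \<longleftrightarrow> (\<exists>z. is_inf_in UNIV (\<le>) {x, y} z)"

definition meet :: "'a::order \<Rightarrow> 'a \<Rightarrow> 'a" where
  "meet x y = (THE z. is_inf_in UNIV (\<le>) {x, y} z)"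

definition dsup :: "('a::order) set \<Rightarrow> 'a" where
  "dsup S = (THE s. is_sup_in UNIV (\<le>) S s)"

definition interval_poset :: "('a::order \<Rightarrow> 'a) \<Rightarrow> ('a \<Rightarrow> 'a) \<Rightarrow> bool" where
  "interval_poset lft rgt \<longleftrightarrow>
     (\<forall>x. lft x \<in> maxD \<and> rgt x \<in> maxD) \<and>
     (\<forall>x. is_inf_in UNIV (\<le>) {lft x, rgt x} x) \<and>
     (\<forall>x y. rgt x = lft y \<longrightarrow>
        has_meet x y \<and> lft (meet x y) = lft x \<and> rgt (meet x y) = rgt y) \<and>
     (\<forall>x p. p \<in> maxD \<and> x \<le> p \<longrightarrow>
        has_meet (lft x) p \<and> has_meet p (rgt x) \<and>
        lft (meet (lft x) p) = lft x \<and> rgt (meet (lft x) p) = p \<and>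
        lft (meet p (rgt x)) = p \<and> rgt (meet p (rgt x)) = rgt x)"

definition maxle :: "('a::order \<Rightarrow> 'a) \<Rightarrow> ('a \<Rightarrow> 'a) \<Rightarrow> 'a \<Rightarrow> 'a \<Rightarrow> bool" where
  "maxle lft rgt a b \<longleftrightarrow> (\<exists>z. a = lft z \<and> b = rgt z)"

definition lfib :: "('a::order \<Rightarrow> 'a) \<Rightarrow> 'a \<Rightarrow> 'a set" where
  "lfib lft p = {x. lft x = p}"

definition rfib :: "('a::order \<Rightarrow> 'a) \<Rightarrow> 'a \<Rightarrow> 'a set" where
  "rfib rgt q = {x. rgt x = q}"

definition scott_open :: "('a::order) set \<Rightarrow> bool" where
  "scott_open U \<longleftrightarrow> (\<forall>x y. x \<in> U \<and> x \<le> y \<longrightarrow> y \<in> U) \<and>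
     (\<forall>S s. directed_in UNIV (\<le>) S \<and> is_sup_in UNIV (\<le>) S s \<and> s \<in> U \<longrightarrow> S \<inter> U \<noteq> {})"

definition scott_compact :: "('a::order) set \<Rightarrow> bool" where
  "scott_compact K \<longleftrightarrow> (\<forall>\<U>. (\<forall>U\<in>\<U>. scott_open U) \<and> K \<subseteq> \<Union>\<U> \<longrightarrow>
     (\<exists>\<F>\<subseteq>\<U>. finite \<F> \<and> K \<subseteq> \<Union>\<F>))"

definition interval_domain :: "('a::order \<Rightarrow> 'a) \<Rightarrow> ('a \<Rightarrow> 'a) \<Rightarrow> bool" where
  "interval_domain lft rgt \<longleftrightarrow>
     interval_poset lft rgt \<and>
     continuous_dcpo (UNIV :: 'a set) (\<le>) \<and>
     \<comment> \<open>(i)\<close>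
     (\<forall>x p. p \<in> wb_up UNIV (\<le>) x \<inter> maxD \<longrightarrow>
        wb_up UNIV (\<le>) (meet (lft x) p) \<noteq> {} \<and> wb_up UNIV (\<le>) (meet p (rgt x)) \<noteq> {}) \<and>
     \<comment> \<open>(ii)\<close>
     (\<forall>x. (wb_up UNIV (\<le>) x \<noteq> {} \<longleftrightarrow>
            (\<forall>y. lft y = lft x \<and> y \<le> x \<longrightarrow> way_below_in (rfib rgt (rgt y)) (\<le>) y (rgt y))) \<and>
          (wb_up UNIV (\<le>) x \<noteq> {} \<longleftrightarrow>
            (\<forall>y. rgt y = rgt x \<and> y \<le> x \<longrightarrow> way_below_in (lfib lft (lft y)) (\<le>) y (lft y)))) \<and>
     \<comment> \<open>(iii)(a)\<close>
     (\<forall>p\<in>maxD. \<forall>S. directed_in UNIV (\<le>) S \<and> S \<subseteq> lfib lft p \<longrightarrow>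
        lft (dsup S) = p \<and>
        (\<forall>q\<in>maxD. \<forall>T. directed_in UNIV (\<le>) T \<and> T \<subseteq> lfib lft q \<and> rgt ` T = rgt ` S \<longrightarrow>
            rgt (dsup S) = rgt (dsup T))) \<and>
     \<comment> \<open>(iii)(b)\<close>
     (\<forall>q\<in>maxD. \<forall>S. directed_in UNIV (\<le>) S \<and> S \<subseteq> rfib rgt q \<longrightarrow>
        rgt (dsup S) = q \<and>
        (\<forall>p\<in>maxD. \<forall>T. directed_in UNIV (\<le>) T \<and> T \<subseteq> rfib rgt p \<and> lft ` T = lft ` S \<longrightarrow>
            lft (dsup S) = lft (dsup T))) \<and>
     \<comment> \<open>(iv)\<close>
     (\<forall>x::'a. scott_compact {y\<in>maxD. x \<le> y})"

end

theory Submission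
  imports Defs
begin


lemma inf_unique:
  fixes z z' :: "'a::order"
  shows "is_inf_in UNIV (\<le>) A z \<Longrightarrow> is_inf_in UNIV (\<le>) A z' \<Longrightarrow> z = z'"
  unfolding is_inf_in_def by (auto intro: order.antisym)

lemma sup_unique:
  fixes z z' :: "'a::order"
  shows "is_sup_in UNIV (\<le>) A z \<Longrightarrow> is_sup_in UNIV (\<le>) A z' \<Longrightarrow> z = z'"
  unfolding is_sup_in_def by (auto intro: order.antisym)

lemma dsup_eq:
  fixes s :: "'a::order"
  assumes "is_sup_in UNIV (\<le>) S s" shows "dsup S = s"
  unfolding dsup_def by (rule the_equality[where P="is_sup_in UNIV (\<le>) S", OF assms]) (rule sup_unique[OF _ assms])

lemma meet_inf:
  fixes x y :: "'a::order"
  assumes "has_meet x y" shows "is_inf_in UNIV (\<le>) {x,y} (meet x y)"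
proof -
  from assms obtain z where z: "is_inf_in UNIV (\<le>) {x, y} z" unfolding has_meet_def by blast
  have "meet x y = z" unfolding meet_def by (rule the_equality[where P="is_inf_in UNIV (\<le>) {x,y}", OF z]) (rule inf_unique[OF _ z])
  with z show ?thesis by simp
qed

lemma wb_le:
  assumes po: "poset_on P le" and yP: "y \<in> P" and wb: "way_below_in P le x y" shows "le x y"
proof -
  have yy: "le y y" using po yP unfolding poset_on_def by blast
  have "directed_in P le {y}" unfolding directed_in_def using yP yy by blast
  moreover have "is_sup_in P le {y} y" unfolding is_sup_in_def using yP yy by blast
  ultimately have "\<exists>t\<in>{y}. le x t" using wb yy unfolding way_below_in_def by blast
  then show ?thesis by blast
qed

lemma wb_mono_left:
  assumes "poset_on P le" "way_below_in P le x y" "le x' x" "x \<in> P" "x' \<in> P"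
  shows "way_below_in P le x' y"
  unfolding way_below_in_def
proof (intro allI impI)
  fix S s assume h: "directed_in P le S \<and> is_sup_in P le S s \<and> le y s"
  then obtain t where t: "t \<in> S" "le x t" using assms(2) unfolding way_below_in_def by blast
  have "t \<in> P" using h t(1) unfolding directed_in_def by auto
  then have "le x' t" using assms(1,3,4,5) t(2) unfolding poset_on_def by blast
  then show "\<exists>t\<in>S. le x' t" using t(1) by blast
qed

lemma wb_mono_right:
  assumes "poset_on P le" "way_below_in P le x y" "le y y'" "y \<in> P" "y' \<in> P"
  shows "way_below_in P le x y'"
  unfolding way_below_in_def
proof (intro allI impI)
  fix S s assume h: "directed_in P le S \<and> is_sup_in P le S s \<and> le y' s"
  then have "s \<in> P" unfolding is_sup_in_def by auto
  then have "le y s" using h assms unfolding poset_on_def by blast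
  then show "\<exists>t\<in>S. le x t" using h assms(2) unfolding way_below_in_def by blast
qed

lemma poset_UNIV: "poset_on (UNIV::'a::order set) (\<le>)"
  unfolding poset_on_def by auto

lemma sup_restrict:
  fixes s :: "'a::order"
  shows "is_sup_in UNIV (\<le>) S s \<Longrightarrow> s \<in> P \<Longrightarrow> is_sup_in P (\<le>) S s"
  unfolding is_sup_in_def by auto

lemma dir_restrict:
  shows "directed_in UNIV (\<le>) S \<Longrightarrow> S \<subseteq> P \<Longrightarrow> directed_in P (\<le>) S"
  unfolding directed_in_def by auto

definition itv :: "('a::order \<Rightarrow> 'a) \<Rightarrow> ('a \<Rightarrow> 'a) \<Rightarrow> 'a \<Rightarrow> 'a \<Rightarrow> 'a" where
  "itv lft rgt a b = (SOME z. lft z = a \<and> rgt z = b)"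

locale IDom =
  fixes lft rgt :: "'a::order \<Rightarrow> 'a"
  assumes ID: "interval_domain lft rgt"
begin

abbreviation "ml \<equiv> maxle lft rgt"
abbreviation "iv \<equiv> itv lft rgt"

lemma IP: "interval_poset lft rgt" using ID unfolding interval_domain_def by (elim conjE)

lemma cdcpo: "continuous_dcpo (UNIV :: 'a set) (\<le>)" using ID unfolding interval_domain_def by (elim conjE)

lemma ID_i_full: "\<forall>x p. p \<in> wb_up UNIV (\<le>) x \<inter> maxD \<longrightarrow>
        wb_up UNIV (\<le>) (meet (lft x) p) \<noteq> {} \<and> wb_up UNIV (\<le>) (meet p (rgt x)) \<noteq> {}"
  using ID unfolding interval_domain_def by (elim conjE)

lemma ID_i: "p \<in> wb_up UNIV (\<le>) x \<Longrightarrow> p \<in> maxD \<Longrightarrow>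
   wb_up UNIV (\<le>) (meet (lft x) p) \<noteq> {} \<and> wb_up UNIV (\<le>) (meet p (rgt x)) \<noteq> {}"
  by (rule ID_i_full[rule_format, OF IntI])

lemma ID_ii_full: "\<forall>x. (wb_up UNIV (\<le>) x \<noteq> {} \<longleftrightarrow>
            (\<forall>y. lft y = lft x \<and> y \<le> x \<longrightarrow> way_below_in (rfib rgt (rgt y)) (\<le>) y (rgt y))) \<and>
          (wb_up UNIV (\<le>) x \<noteq> {} \<longleftrightarrow>
            (\<forall>y. rgt y = rgt x \<and> y \<le> x \<longrightarrow> way_below_in (lfib lft (lft y)) (\<le>) y (lft y)))"
  using ID unfolding interval_domain_def by (elim conjE)

lemma ID_iib: "wb_up UNIV (\<le>) x \<noteq> {} \<Longrightarrow> lft y = lft x \<Longrightarrow> y \<le> x \<Longrightarrow>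
   way_below_in (rfib rgt (rgt y)) (\<le>) y (rgt y)"
proof -
  assume a: "wb_up UNIV (\<le>) x \<noteq> {}" "lft y = lft x" "y \<le> x"
  have h: "\<forall>y. lft y = lft x \<and> y \<le> x \<longrightarrow> way_below_in (rfib rgt (rgt y)) (\<le>) y (rgt y)"
    using iffD1[OF conjunct1[OF spec[OF ID_ii_full, of x]] a(1)] .
  show ?thesis using h[rule_format, OF conjI[OF a(2) a(3)]] .
qed

lemma ID_iic: "wb_up UNIV (\<le>) x \<noteq> {} \<Longrightarrow> rgt y = rgt x \<Longrightarrow> y \<le> x \<Longrightarrow>
   way_below_in (lfib lft (lft y)) (\<le>) y (lft y)"
proof -
  assume a: "wb_up UNIV (\<le>) x \<noteq> {}" "rgt y = rgt x" "y \<le> x"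
  have h: "\<forall>y. rgt y = rgt x \<and> y \<le> x \<longrightarrow> way_below_in (lfib lft (lft y)) (\<le>) y (lft y)"
    using iffD1[OF conjunct2[OF spec[OF ID_ii_full, of x]] a(1)] .
  show ?thesis using h[rule_format, OF conjI[OF a(2) a(3)]] .
qed

lemma ID_iiia_full: "\<forall>p\<in>maxD. \<forall>S. directed_in UNIV (\<le>) S \<and> S \<subseteq> lfib lft p \<longrightarrow>
        lft (dsup S) = p \<and>
        (\<forall>q\<in>maxD. \<forall>T. directed_in UNIV (\<le>) T \<and> T \<subseteq> lfib lft q \<and> rgt ` T = rgt ` S \<longrightarrow>
            rgt (dsup S) = rgt (dsup T))"
  using ID unfolding interval_domain_def by (elim conjE) assumption

lemma ID_iiia2: "p \<in> maxD \<Longrightarrow> directed_in UNIV (\<le>) S \<Longrightarrow> S \<subseteq> lfib lft p \<Longrightarrow>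
   q \<in> maxD \<Longrightarrow> directed_in UNIV (\<le>) T \<Longrightarrow> T \<subseteq> lfib lft q \<Longrightarrow> rgt ` T = rgt ` S \<Longrightarrow>
   rgt (dsup S) = rgt (dsup T)"
proof -
  assume a: "p \<in> maxD" "directed_in UNIV (\<le>) S" "S \<subseteq> lfib lft p"
     "q \<in> maxD" "directed_in UNIV (\<le>) T" "T \<subseteq> lfib lft q" "rgt ` T = rgt ` S"
  note h = conjunct2[OF ID_iiia_full[rule_format, OF a(1) conjI[OF a(2) a(3)]]]
  show ?thesis by (rule h[rule_format, OF a(4) conjI[OF a(5) conjI[OF a(6) a(7)]]])
qed

lemma ID_iiib_full: "\<forall>q\<in>maxD. \<forall>S. directed_in UNIV (\<le>) S \<and> S \<subseteq> rfib rgt q \<longrightarrow>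
        rgt (dsup S) = q \<and>
        (\<forall>p\<in>maxD. \<forall>T. directed_in UNIV (\<le>) T \<and> T \<subseteq> rfib rgt p \<and> lft ` T = lft ` S \<longrightarrow>
            lft (dsup S) = lft (dsup T))"
  using ID unfolding interval_domain_def by (elim conjE) assumption

lemma ID_iiib2: "q \<in> maxD \<Longrightarrow> directed_in UNIV (\<le>) S \<Longrightarrow> S \<subseteq> rfib rgt q \<Longrightarrow>
   p \<in> maxD \<Longrightarrow> directed_in UNIV (\<le>) T \<Longrightarrow> T \<subseteq> rfib rgt p \<Longrightarrow> lft ` T = lft ` S \<Longrightarrow>
   lft (dsup S) = lft (dsup T)"
proof -
  assume a: "q \<in> maxD" "directed_in UNIV (\<le>) S" "S \<subseteq> rfib rgt q"
     "p \<in> maxD" "directed_in UNIV (\<le>) T" "T \<subseteq> rfib rgt p" "lft ` T = lft ` S"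
  note h = conjunct2[OF ID_iiib_full[rule_format, OF a(1) conjI[OF a(2) a(3)]]]
  show ?thesis by (rule h[rule_format, OF a(4) conjI[OF a(5) conjI[OF a(6) a(7)]]])
qed

lemma ID_iiia: "p \<in> maxD \<Longrightarrow> directed_in UNIV (\<le>) S \<Longrightarrow> S \<subseteq> lfib lft p \<Longrightarrow>
   lft (dsup S) = p"
  using ID_iiia_full by blast

lemma ID_iiib: "q \<in> maxD \<Longrightarrow> directed_in UNIV (\<le>) S \<Longrightarrow> S \<subseteq> rfib rgt q \<Longrightarrow>
   rgt (dsup S) = q"
  using ID_iiib_full by blast

lemma max_eq: "p \<in> maxD \<Longrightarrow> p \<le> y \<Longrightarrow> y = p" unfolding maxD_def by blast

lemma IP1: "\<forall>x. lft x \<in> maxD \<and> rgt x \<in> maxD"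
  using IP unfolding interval_poset_def by (elim conjE)

lemma IP2: "\<forall>x. is_inf_in UNIV (\<le>) {lft x, rgt x} x"
  using IP unfolding interval_poset_def by (elim conjE)

lemma IP3: "\<forall>x y. rgt x = lft y \<longrightarrow>
        has_meet x y \<and> lft (meet x y) = lft x \<and> rgt (meet x y) = rgt y"
  using IP unfolding interval_poset_def by (elim conjE)

lemma IP4: "\<forall>x p. p \<in> maxD \<and> x \<le> p \<longrightarrow>
        has_meet (lft x) p \<and> has_meet p (rgt x) \<and>
        lft (meet (lft x) p) = lft x \<and> rgt (meet (lft x) p) = p \<and>
        lft (meet p (rgt x)) = p \<and> rgt (meet p (rgt x)) = rgt x"
  using IP unfolding interval_poset_def by (elim conjE)

lemma lft_max: "lft x \<in> maxD" and rgt_max: "rgt x \<in> maxD"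
  using IP1 by blast+

lemma inf_lr: "is_inf_in UNIV (\<le>) {lft x, rgt x} x"
  using IP2 by blast

lemma le_lft: "x \<le> lft x" and le_rgt: "x \<le> rgt x"
  using inf_lr[of x] unfolding is_inf_in_def by auto

lemma le_inf: "z \<le> lft x \<Longrightarrow> z \<le> rgt x \<Longrightarrow> z \<le> x"
  using inf_lr[of x] unfolding is_inf_in_def by auto

lemma uniq: "lft x = lft y \<Longrightarrow> rgt x = rgt y \<Longrightarrow> x = y"
  using inf_lr[of x] inf_lr[of y] by (auto dest: inf_unique)

lemma fix_max: "p \<in> maxD \<Longrightarrow> lft p = p \<and> rgt p = p"
  using max_eq le_lft le_rgt by metis

lemma glue: "rgt x = lft y \<Longrightarrow> \<exists>z. lft z = lft x \<and> rgt z = rgt y \<and> z \<le> x \<and> z \<le> y"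
proof -
  assume h: "rgt x = lft y"
  then have "has_meet x y \<and> lft (meet x y) = lft x \<and> rgt (meet x y) = rgt y"
    using IP3 h by blast
  then show ?thesis using meet_inf[of x y] unfolding is_inf_in_def by blast
qed

lemma meet_lp: "p \<in> maxD \<Longrightarrow> x \<le> p \<Longrightarrow>
   lft (meet (lft x) p) = lft x \<and> rgt (meet (lft x) p) = p \<and>
   lft (meet p (rgt x)) = p \<and> rgt (meet p (rgt x)) = rgt x"
  using IP4 by blast

lemma F5: "p \<in> maxD \<Longrightarrow> x \<le> p \<Longrightarrow> ml (lft x) p \<and> ml p (rgt x)"
  using meet_lp unfolding maxle_def by metis

lemma above: "z \<le> z' \<Longrightarrow> ml (lft z) (lft z') \<and> ml (rgt z') (rgt z)"
  using F5[OF lft_max, of z z'] F5[OF rgt_max, of z z'] le_lft[of z'] le_rgt[of z']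
  by (meson order.trans)

lemma ml_max: "ml a b \<Longrightarrow> a \<in> maxD \<and> b \<in> maxD"
  unfolding maxle_def using lft_max rgt_max by blast

lemma ml_refl: "p \<in> maxD \<Longrightarrow> ml p p"
  unfolding maxle_def using fix_max by metis

lemma ml_trans: "ml a b \<Longrightarrow> ml b c \<Longrightarrow> ml a c"
  unfolding maxle_def using glue by metis

lemma ml_antisym: "ml a b \<Longrightarrow> ml b a \<Longrightarrow> a = b"
proof -
  assume "ml a b" "ml b a"
  then obtain z w where z: "lft z = a" "rgt z = b" and w: "lft w = b" "rgt w = a"
    unfolding maxle_def by metis
  have "is_inf_in UNIV (\<le>) {a,b} z" using inf_lr[of z] z by simp
  moreover have "is_inf_in UNIV (\<le>) {a,b} w" using inf_lr[of w] w by (simp add: insert_commute)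
  ultimately have "z = w" by (rule inf_unique)
  then show "a = b" using z w by simp
qed

lemma poset_ml: "poset_on maxD ml"
  unfolding poset_on_def using ml_refl ml_trans ml_antisym by blast

lemma mono_l: "ml t t' \<Longrightarrow> lft z = t \<Longrightarrow> rgt z = u \<Longrightarrow> lft z' = t' \<Longrightarrow> rgt z' = u \<Longrightarrow> z \<le> z'"
proof -
  assume a: "ml t t'" "lft z = t" "rgt z = u" "lft z' = t'" "rgt z' = u"
  then obtain w where w: "lft w = t" "rgt w = t'" unfolding maxle_def by metis
  then obtain v where "lft v = t" "rgt v = u" "v \<le> z'" using glue[of w z'] a by metis
  moreover have "v = z" using uniq a calculation by metis
  ultimately show "z \<le> z'" by simp
qed

lemma mono_r: "ml u' u \<Longrightarrow> lft z = t \<Longrightarrow> rgt z = u \<Longrightarrow> lft z' = t \<Longrightarrow> rgt z' = u' \<Longrightarrow> z \<le> z'"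
proof -
  assume a: "ml u' u" "lft z = t" "rgt z = u" "lft z' = t" "rgt z' = u'"
  then obtain w where w: "lft w = u'" "rgt w = u" unfolding maxle_def by metis
  then obtain v where "lft v = t" "rgt v = u" "v \<le> z'" using glue[of z' w] a by metis
  moreover have "v = z" using uniq a calculation by metis
  ultimately show "z \<le> z'" by simp
qed

lemma iv: "ml a b \<Longrightarrow> lft (iv a b) = a \<and> rgt (iv a b) = b"
  unfolding itv_def maxle_def by (rule someI_ex) blast

lemma cont: "\<exists>S. S \<subseteq> wb_down UNIV (\<le>) (x::'a) \<and> directed_in UNIV (\<le>) S \<and> is_sup_in UNIV (\<le>) S x"
proof -
  have "continuous_poset (UNIV :: 'a set) (\<le>)" using cdcpo unfolding continuous_dcpo_def by (elim conjE)
  then have "\<exists>B\<subseteq>(UNIV :: 'a set). \<forall>x\<in>UNIV. \<exists>S. S \<subseteq> B \<inter> wb_down UNIV (\<le>) x \<and> directed_in UNIV (\<le>) S \<and> is_sup_in UNIV (\<le>) S x"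
    unfolding continuous_poset_def by (elim conjE)
  then obtain B where B: "\<forall>x\<in>(UNIV :: 'a set). \<exists>S. S \<subseteq> B \<inter> wb_down UNIV (\<le>) x \<and> directed_in UNIV (\<le>) S \<and> is_sup_in UNIV (\<le>) S x"
    by (elim exE conjE)
  then obtain S where "S \<subseteq> B \<inter> wb_down UNIV (\<le>) x" "directed_in UNIV (\<le>) S" "is_sup_in UNIV (\<le>) S x"
    by (meson UNIV_I)
  then show ?thesis by (meson Int_lower2 order_trans)
qed

lemma dcpo: "directed_in UNIV (\<le>) (S::'a set) \<Longrightarrow> is_sup_in UNIV (\<le>) S (dsup S)"
proof -
  assume d: "directed_in UNIV (\<le>) S"
  have "\<forall>S::'a set. directed_in UNIV (\<le>) S \<longrightarrow> (\<exists>s. is_sup_in UNIV (\<le>) S s)"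
    using cdcpo unfolding continuous_dcpo_def by (elim conjE)
  then obtain s where s: "is_sup_in UNIV (\<le>) S s" using d by blast
  show ?thesis using s dsup_eq[OF s] by simp
qed

lemma wbD_le: "way_below_in UNIV (\<le>) (y::'a) x \<Longrightarrow> y \<le> x"
  by (erule wb_le[OF poset_UNIV UNIV_I])

end


context IDom
begin

lemma img_id: "(\<And>t. t \<in> L \<Longrightarrow> g (f t) = t) \<Longrightarrow> g ` f ` L = L"
  by (force simp: image_image)

lemma dir_img_l:
  assumes d: "directed_in maxD ml L" and f: "\<And>t. t \<in> L \<Longrightarrow> lft (f t) = t \<and> rgt (f t) = u"
  shows "directed_in UNIV (\<le>) (f ` L)"
  unfolding directed_in_def
proof (intro conjI ballI)
  show "f ` L \<subseteq> UNIV" by simp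
  show "f ` L \<noteq> {}" using d unfolding directed_in_def by auto
next
  fix a b assume "a \<in> f ` L" "b \<in> f ` L"
  then obtain t1 t2 where t: "t1 \<in> L" "t2 \<in> L" "a = f t1" "b = f t2" by auto
  then obtain t3 where t3: "t3 \<in> L" "ml t1 t3" "ml t2 t3" using d unfolding directed_in_def by blast
  have "a \<le> f t3" using mono_l[OF t3(2)] f t t3 by metis
  moreover have "b \<le> f t3" using mono_l[OF t3(3)] f t t3 by metis
  ultimately show "\<exists>c\<in>f ` L. a \<le> c \<and> b \<le> c" using t3 by blast
qed

lemma dir_img_r:
  assumes d: "filtered_in maxD ml R" and f: "\<And>r. r \<in> R \<Longrightarrow> lft (f r) = t \<and> rgt (f r) = r"
  shows "directed_in UNIV (\<le>) (f ` R)"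
  unfolding directed_in_def
proof (intro conjI ballI)
  show "f ` R \<subseteq> UNIV" by simp
  show "f ` R \<noteq> {}" using d unfolding filtered_in_def by auto
next
  fix a b assume "a \<in> f ` R" "b \<in> f ` R"
  then obtain t1 t2 where t: "t1 \<in> R" "t2 \<in> R" "a = f t1" "b = f t2" by auto
  then obtain t3 where t3: "t3 \<in> R" "ml t3 t1" "ml t3 t2" using d unfolding filtered_in_def by blast
  have "a \<le> f t3" using mono_r[OF t3(2)] f t t3 by metis
  moreover have "b \<le> f t3" using mono_r[OF t3(3)] f t t3 by metis
  ultimately show "\<exists>c\<in>f ` R. a \<le> c \<and> b \<le> c" using t3 by blast
qed

lemma K1:
  assumes ne: "wb_up UNIV (\<le>) z \<noteq> {}"
  shows "way_below_in maxD ml (lft z) (rgt z)"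
  unfolding way_below_in_def
proof (intro allI impI)
  fix S s assume h: "directed_in maxD ml S \<and> is_sup_in maxD ml S s \<and> ml (rgt z) s"
  then have dS: "directed_in maxD ml S" and sS: "is_sup_in maxD ml S s" and bs: "ml (rgt z) s" by auto
  have smax: "s \<in> maxD" using sS unfolding is_sup_in_def by auto
  have tS: "\<And>t. t \<in> S \<Longrightarrow> ml t s" using sS unfolding is_sup_in_def by auto
  obtain w where w: "lft w = rgt z" "rgt w = s" using bs unfolding maxle_def by metis
  obtain y where y: "lft y = lft z" "rgt y = s" "y \<le> z" using glue[of z w] w by metis
  have wby: "way_below_in (rfib rgt s) (\<le>) y s" using ID_iib[OF ne y(1) y(3)] y(2) by simp
  define E where "E = (\<lambda>t. iv t s) ` S"
  have Eprop: "\<And>t. t \<in> S \<Longrightarrow> lft (iv t s) = t \<and> rgt (iv t s) = s" using iv tS by blast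
  have dE: "directed_in (rfib rgt s) (\<le>) E"
    unfolding E_def
    by (rule dir_restrict[OF dir_img_l[OF dS Eprop]]) (use Eprop in \<open>auto simp: rfib_def\<close>)
  have supE: "is_sup_in (rfib rgt s) (\<le>) E s"
    unfolding is_sup_in_def
  proof (intro conjI ballI impI)
    show "s \<in> rfib rgt s" using fix_max[OF smax] unfolding rfib_def by simp
    fix e assume "e \<in> E"
    then obtain t where t: "t \<in> S" "e = iv t s" unfolding E_def by blast
    then show "e \<le> s" using Eprop[OF t(1)] le_rgt[of e] by simp
  next
    fix u assume u: "u \<in> rfib rgt s" "\<forall>e\<in>E. e \<le> u"
    have "\<forall>t\<in>S. ml t (lft u)"
    proof
      fix t assume "t \<in> S"
      then have "iv t s \<le> u" using u unfolding E_def by auto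
      then have "ml (lft (iv t s)) (lft u)" using above by blast
      then show "ml t (lft u)" using Eprop[OF \<open>t\<in>S\<close>] by simp
    qed
    moreover have "\<forall>v\<in>maxD. (\<forall>x\<in>S. ml x v) \<longrightarrow> ml s v" using sS unfolding is_sup_in_def by blast
    ultimately have "ml s (lft u)" using lft_max[of u] by blast
    moreover have "ml (lft u) s" using u(1) unfolding rfib_def maxle_def by blast
    ultimately have "lft u = s" using ml_antisym by blast
    moreover have "rgt u = s" using u(1) unfolding rfib_def by simp
    ultimately have "u = s" using uniq[of u s] fix_max[OF smax] by simp
    then show "s \<le> u" by simp
  qed
  have "y \<le> s" using le_rgt[of y] y(2) by simp
  then obtain e where "e \<in> E" "y \<le> e" using wby dE supE unfolding way_below_in_def by blast
  then obtain t where "t \<in> S" "e = iv t s" unfolding E_def by auto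
  then have "ml (lft y) (lft e)" using above[OF \<open>y \<le> e\<close>] by blast
  then have "ml (lft y) t" using Eprop[OF \<open>t \<in> S\<close>] \<open>e = iv t s\<close> by simp
  then show "\<exists>t\<in>S. ml (lft z) t" using y(1) \<open>t\<in>S\<close> by auto
qed

lemma K2:
  assumes pm: "p \<in> maxD" and wb: "way_below_in UNIV (\<le>) y p"
  shows "way_below_in maxD ml (lft y) p \<and> way_below_in maxD ml p (rgt y)"
proof -
  have yp: "y \<le> p" using wbD_le[OF wb] .
  have "p \<in> wb_up UNIV (\<le>) y" using wb unfolding wb_up_def by simp
  from ID_i[OF this pm] have n1: "wb_up UNIV (\<le>) (meet (lft y) p) \<noteq> {}"
     and n2: "wb_up UNIV (\<le>) (meet p (rgt y)) \<noteq> {}" by auto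
  show ?thesis using K1[OF n1] K1[OF n2] meet_lp[OF pm yp] by simp
qed

end


context IDom
begin

lemma Lex:
  assumes xm: "x \<in> maxD"
  shows "\<exists>S. S \<subseteq> wb_down UNIV (\<le>) x \<and> lft ` S \<subseteq> wb_down maxD ml x \<and>
     directed_in maxD ml (lft ` S) \<and> is_sup_in maxD ml (lft ` S) x"
proof -
  obtain S where S: "S \<subseteq> wb_down UNIV (\<le>) x" and dS: "directed_in UNIV (\<le>) S"
    and sS: "is_sup_in UNIV (\<le>) S x" using cont by blast
  have wbS: "\<And>y. y \<in> S \<Longrightarrow> way_below_in UNIV (\<le>) y x" using S unfolding wb_down_def by auto
  have yx: "\<And>y. y \<in> S \<Longrightarrow> y \<le> x" using wbS wbD_le by blast
  have L1: "lft ` S \<subseteq> wb_down maxD ml x" using K2[OF xm] wbS lft_max unfolding wb_down_def by auto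
  have dL: "directed_in maxD ml (lft ` S)"
    unfolding directed_in_def
  proof (intro conjI ballI)
    show "lft ` S \<subseteq> maxD" using lft_max by auto
    show "lft ` S \<noteq> {}" using dS unfolding directed_in_def by auto
  next
    fix a b assume "a \<in> lft ` S" "b \<in> lft ` S"
    then obtain y1 y2 where t: "y1 \<in> S" "y2 \<in> S" "a = lft y1" "b = lft y2" by auto
    then obtain y3 where y3: "y3 \<in> S" "y1 \<le> y3" "y2 \<le> y3" using dS unfolding directed_in_def by blast
    show "\<exists>c\<in>lft ` S. ml a c \<and> ml b c" using above y3 t by blast
  qed
  have supL: "is_sup_in maxD ml (lft ` S) x"
    unfolding is_sup_in_def
  proof (intro conjI ballI impI)
    show "x \<in> maxD" by (rule xm)
    fix t assume "t \<in> lft ` S" then show "ml t x" using F5[OF xm] yx by auto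
  next
    fix u assume um: "u \<in> maxD" and ub: "\<forall>t\<in>lft ` S. ml t u"
    define S' where "S' = (\<lambda>t. iv t x) ` lft ` S"
    define T where "T = (\<lambda>t. iv t u) ` lft ` S"
    have tx: "\<And>t. t \<in> lft ` S \<Longrightarrow> lft (iv t x) = t \<and> rgt (iv t x) = x"
      using iv F5[OF xm] yx by blast
    have tu: "\<And>t. t \<in> lft ` S \<Longrightarrow> lft (iv t u) = t \<and> rgt (iv t u) = u"
      using iv ub by blast
    have dS': "directed_in UNIV (\<le>) S'" unfolding S'_def by (rule dir_img_l[OF dL tx])
    have dT: "directed_in UNIV (\<le>) T" unfolding T_def by (rule dir_img_l[OF dL tu])
    have S'sub: "S' \<subseteq> rfib rgt x" using tx unfolding S'_def rfib_def by auto
    have Tsub: "T \<subseteq> rfib rgt u" using tu unfolding T_def rfib_def by auto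
    have eq: "lft ` T = lft ` S'" unfolding T_def S'_def
      using img_id[of "lft ` S" lft "\<lambda>t. iv t u"] img_id[of "lft ` S" lft "\<lambda>t. iv t x"] tu tx by simp
    have supS': "is_sup_in UNIV (\<le>) S' x"
      unfolding is_sup_in_def
    proof (intro conjI ballI impI)
      show "x \<in> UNIV" by simp
      fix e assume "e \<in> S'"
      then obtain t where t: "t \<in> lft ` S" "e = iv t x" unfolding S'_def by blast
      then show "e \<le> x" using tx[OF t(1)] le_rgt[of e] by simp
    next
      fix v assume v: "v \<in> UNIV" "\<forall>e\<in>S'. e \<le> v"
      have "\<forall>y\<in>S. y \<le> v"
      proof
        fix y assume yS: "y \<in> S"
        have "y \<le> iv (lft y) x" using le_inf[of y "iv (lft y) x"] tx[of "lft y"] yS yx le_lft by auto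
        moreover have "iv (lft y) x \<le> v" using v yS unfolding S'_def by auto
        ultimately show "y \<le> v" by simp
      qed
      then show "x \<le> v" using sS unfolding is_sup_in_def by blast
    qed
    have "dsup S' = x" by (rule dsup_eq[OF supS'])
    then have "lft (dsup T) = x"
      using ID_iiib2[OF xm dS' S'sub um dT Tsub eq] fix_max[OF xm] by simp
    moreover have "rgt (dsup T) = u" by (rule ID_iiib[OF um dT Tsub])
    ultimately show "ml x u" unfolding maxle_def by metis
  qed
  show ?thesis using S L1 dL supL by blast
qed

lemma K4:
  assumes xm: "x \<in> maxD" and bm: "b \<in> maxD" and wb: "way_below_in maxD ml x b"
  shows "ml x b \<and> wb_up UNIV (\<le>) (iv x b) \<noteq> {}"
proof -
  have xb: "ml x b" using wb_le[OF poset_ml bm wb] .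
  obtain S where S: "S \<subseteq> wb_down UNIV (\<le>) b" and dL: "directed_in maxD ml (lft ` S)"
    and sL: "is_sup_in maxD ml (lft ` S) b" using Lex[OF bm] by blast
  obtain t where t: "t \<in> lft ` S" "ml x t" using wb dL sL ml_refl[OF bm] unfolding way_below_in_def by blast
  then obtain y where y: "y \<in> S" "t = lft y" by auto
  have wy: "way_below_in UNIV (\<le>) y b" using S y unfolding wb_down_def by auto
  have yb: "y \<le> b" using wbD_le[OF wy] .
  have "b \<in> wb_up UNIV (\<le>) y" using wy unfolding wb_up_def by simp
  then have ne: "wb_up UNIV (\<le>) (meet (lft y) b) \<noteq> {}" using ID_i bm by blast
  have ml: "lft (meet (lft y) b) = t" "rgt (meet (lft y) b) = b" using meet_lp[OF bm yb] y by auto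
  have le: "iv x b \<le> meet (lft y) b" using mono_l[OF t(2)] iv[OF xb] ml by metis
  from ne obtain w where "w \<in> wb_up UNIV (\<le>) (meet (lft y) b)" by blast
  then have "way_below_in UNIV (\<le>) (meet (lft y) b) w" unfolding wb_up_def by simp
  then have "way_below_in UNIV (\<le>) (iv x b) w" using wb_mono_left[OF poset_UNIV _ le] by simp
  then have "w \<in> wb_up UNIV (\<le>) (iv x b)" unfolding wb_up_def by simp
  then show ?thesis using xb by blast
qed

lemma Rex:
  assumes xm: "x \<in> maxD"
  shows "\<exists>R. R \<subseteq> wb_up maxD ml x \<and> filtered_in maxD ml R \<and> is_inf_in maxD ml R x \<and>
     (\<forall>b\<in>maxD. way_below_in maxD ml x b \<longrightarrow> (\<exists>r\<in>R. ml r b))"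
proof -
  obtain S where S: "S \<subseteq> wb_down UNIV (\<le>) x" and dS: "directed_in UNIV (\<le>) S"
    and sS: "is_sup_in UNIV (\<le>) S x" using cont by blast
  have wbS: "\<And>y. y \<in> S \<Longrightarrow> way_below_in UNIV (\<le>) y x" using S unfolding wb_down_def by auto
  have yx: "\<And>y. y \<in> S \<Longrightarrow> y \<le> x" using wbS wbD_le by blast
  define R where "R = rgt ` S"
  have R1: "R \<subseteq> wb_up maxD ml x" using K2[OF xm] wbS rgt_max unfolding wb_up_def R_def by auto
  have fR: "filtered_in maxD ml R"
    unfolding filtered_in_def R_def
  proof (intro conjI ballI)
    show "rgt ` S \<subseteq> maxD" using rgt_max by auto
    show "rgt ` S \<noteq> {}" using dS unfolding directed_in_def by auto
  next
    fix a b assume "a \<in> rgt ` S" "b \<in> rgt ` S"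
    then obtain y1 y2 where t: "y1 \<in> S" "y2 \<in> S" "a = rgt y1" "b = rgt y2" by auto
    then obtain y3 where y3: "y3 \<in> S" "y1 \<le> y3" "y2 \<le> y3" using dS unfolding directed_in_def by blast
    show "\<exists>c\<in>rgt ` S. ml c a \<and> ml c b" using above y3 t by blast
  qed
  have rx: "\<And>r. r \<in> R \<Longrightarrow> lft (iv x r) = x \<and> rgt (iv x r) = r"
    using iv F5[OF xm] yx unfolding R_def by blast
  define S' where "S' = (\<lambda>r. iv x r) ` R"
  have dS': "directed_in UNIV (\<le>) S'" unfolding S'_def by (rule dir_img_r[OF fR rx])
  have S'sub: "S' \<subseteq> lfib lft x" using rx unfolding S'_def lfib_def by auto
  have supS': "is_sup_in UNIV (\<le>) S' x"
    unfolding is_sup_in_def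
  proof (intro conjI ballI impI)
    show "x \<in> UNIV" by simp
    fix e assume "e \<in> S'"
    then obtain r where t: "r \<in> R" "e = iv x r" unfolding S'_def by blast
    then show "e \<le> x" using rx[OF t(1)] le_lft[of e] by simp
  next
    fix v assume v: "v \<in> UNIV" "\<forall>e\<in>S'. e \<le> v"
    have "\<forall>y\<in>S. y \<le> v"
    proof
      fix y assume yS: "y \<in> S"
      have "y \<le> iv x (rgt y)" using le_inf[of y "iv x (rgt y)"] rx[of "rgt y"] yS yx le_rgt
        unfolding R_def by auto
      moreover have "iv x (rgt y) \<le> v" using v yS unfolding S'_def R_def by auto
      ultimately show "y \<le> v" by simp
    qed
    then show "x \<le> v" using sS unfolding is_sup_in_def by blast
  qed
  have dsx: "dsup S' = x" by (rule dsup_eq[OF supS'])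
  have infR: "is_inf_in maxD ml R x"
    unfolding is_inf_in_def
  proof (intro conjI ballI impI)
    show "x \<in> maxD" by (rule xm)
    fix r assume "r \<in> R" then show "ml x r" using F5[OF xm] yx unfolding R_def by auto
  next
    fix u assume um: "u \<in> maxD" and lb: "\<forall>r\<in>R. ml u r"
    define T where "T = (\<lambda>r. iv u r) ` R"
    have ru: "\<And>r. r \<in> R \<Longrightarrow> lft (iv u r) = u \<and> rgt (iv u r) = r" using iv lb by blast
    have dT: "directed_in UNIV (\<le>) T" unfolding T_def by (rule dir_img_r[OF fR ru])
    have Tsub: "T \<subseteq> lfib lft u" using ru unfolding T_def lfib_def by auto
    have eq: "rgt ` T = rgt ` S'" unfolding T_def S'_def
      using img_id[of R rgt "\<lambda>r. iv u r"] img_id[of R rgt "\<lambda>r. iv x r"] ru rx by simp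
    have "rgt (dsup T) = x"
      using ID_iiia2[OF xm dS' S'sub um dT Tsub eq] dsx fix_max[OF xm] by simp
    moreover have "lft (dsup T) = u" by (rule ID_iiia[OF um dT Tsub])
    ultimately show "ml u x" unfolding maxle_def by metis
  qed
  have K3: "\<forall>b\<in>maxD. way_below_in maxD ml x b \<longrightarrow> (\<exists>r\<in>R. ml r b)"
  proof (intro ballI impI)
    fix b assume bm: "b \<in> maxD" and wb: "way_below_in maxD ml x b"
    from K4[OF xm bm wb] have xb: "ml x b" and ne: "wb_up UNIV (\<le>) (iv x b) \<noteq> {}" by auto
    have c: "lft (iv x b) = x" "rgt (iv x b) = b" using iv[OF xb] by auto
    have wc: "way_below_in (lfib lft x) (\<le>) (iv x b) x"
      using ID_iic[OF ne, of "iv x b"] c by simp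
    have xl: "x \<in> lfib lft x" using fix_max[OF xm] unfolding lfib_def by simp
    have d2: "directed_in (lfib lft x) (\<le>) S'" by (rule dir_restrict[OF dS' S'sub])
    have s2: "is_sup_in (lfib lft x) (\<le>) S' x" by (rule sup_restrict[OF supS' xl])
    have "iv x b \<le> x" using le_lft[of "iv x b"] c by simp
    then obtain e where "e \<in> S'" "iv x b \<le> e" using wc d2 s2 unfolding way_below_in_def by blast
    then obtain r where r: "r \<in> R" "e = iv x r" unfolding S'_def by auto
    have "ml (rgt e) (rgt (iv x b))" using above[OF \<open>iv x b \<le> e\<close>] by simp
    then have "ml r b" using r rx c by simp
    then show "\<exists>r\<in>R. ml r b" using r by blast
  qed
  show ?thesis using R1 fR infR K3 by blast
qed

lemma bic1:
  assumes am: "a \<in> maxD" and bm: "b \<in> maxD" and wb: "way_below_in maxD ml a b"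
    and fS: "filtered_in maxD ml S" and iS: "is_inf_in maxD ml S i" and ia: "ml i a"
  shows "\<exists>s\<in>S. ml s b"
proof -
  from K4[OF am bm wb] have ab: "ml a b" and ne: "wb_up UNIV (\<le>) (iv a b) \<noteq> {}" by auto
  have ib: "ml i b" using ml_trans[OF ia ab] .
  have im: "i \<in> maxD" using iS unfolding is_inf_in_def by auto
  have c: "lft (iv a b) = a" "rgt (iv a b) = b" using iv[OF ab] by auto
  have y: "lft (iv i b) = i" "rgt (iv i b) = b" using iv[OF ib] by auto
  have yc: "iv i b \<le> iv a b" using mono_l[OF ia y c] .
  have wy: "way_below_in (lfib lft i) (\<le>) (iv i b) i"
    using ID_iic[OF ne, of "iv i b"] y c yc by simp
  have is': "\<And>s. s \<in> S \<Longrightarrow> ml i s" using iS unfolding is_inf_in_def by auto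
  have sx: "\<And>s. s \<in> S \<Longrightarrow> lft (iv i s) = i \<and> rgt (iv i s) = s" using iv is' by blast
  define E where "E = (\<lambda>s. iv i s) ` S"
  have dE: "directed_in UNIV (\<le>) E" unfolding E_def by (rule dir_img_r[OF fS sx])
  have Esub: "E \<subseteq> lfib lft i" using sx unfolding E_def lfib_def by auto
  define d where "d = dsup E"
  have supd: "is_sup_in UNIV (\<le>) E d" unfolding d_def by (rule dcpo[OF dE])
  have ld: "lft d = i" unfolding d_def by (rule ID_iiia[OF im dE Esub])
  have "\<forall>s\<in>S. ml (rgt d) s"
  proof
    fix s assume sS: "s \<in> S"
    then have "iv i s \<le> d" using supd unfolding is_sup_in_def E_def by auto
    then show "ml (rgt d) s" using above sx sS by metis
  qed
  then have "ml (rgt d) i" using iS rgt_max unfolding is_inf_in_def by blast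
  moreover have "ml i (rgt d)" using ld unfolding maxle_def by metis
  ultimately have "rgt d = i" using ml_antisym by blast
  then have di: "d = i" using uniq ld fix_max[OF im] by metis
  have il: "i \<in> lfib lft i" using fix_max[OF im] unfolding lfib_def by simp
  have d2: "directed_in (lfib lft i) (\<le>) E" by (rule dir_restrict[OF dE Esub])
  have s2: "is_sup_in (lfib lft i) (\<le>) E i" using sup_restrict[OF supd] di il by simp
  have "iv i b \<le> i" using le_lft[of "iv i b"] y by simp
  then obtain e where "e \<in> E" "iv i b \<le> e" using wy d2 s2 unfolding way_below_in_def by blast
  then obtain s where s: "s \<in> S" "e = iv i s" unfolding E_def by auto
  have "ml (rgt e) (rgt (iv i b))" using above[OF \<open>iv i b \<le> e\<close>] by simp
  then have "ml s b" using s sx y by simp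
  then show ?thesis using s by blast
qed

lemma bic2:
  assumes am: "a \<in> maxD" and bm: "b \<in> maxD"
    and H: "\<forall>S i. filtered_in maxD ml S \<and> is_inf_in maxD ml S i \<and> ml i a \<longrightarrow> (\<exists>s\<in>S. ml s b)"
  shows "way_below_in maxD ml a b"
proof -
  obtain R where R: "R \<subseteq> wb_up maxD ml a" "filtered_in maxD ml R" "is_inf_in maxD ml R a"
    using Rex[OF am] by blast
  then obtain r where r: "r \<in> R" "ml r b" using H ml_refl[OF am] by blast
  have "way_below_in maxD ml a r" "r \<in> maxD" using R(1) r(1) unfolding wb_up_def by auto
  then show ?thesis using wb_mono_right[OF poset_ml _ r(2) _ bm] by blast
qed

end


context IDom
begin

lemma P1:
  assumes xm: "x \<in> maxD"
  shows "directed_in maxD ml (wb_down maxD ml x) \<and> is_sup_in maxD ml (wb_down maxD ml x) x"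
proof -
  obtain S where L1: "lft ` S \<subseteq> wb_down maxD ml x" and dL: "directed_in maxD ml (lft ` S)"
    and sL: "is_sup_in maxD ml (lft ` S) x" using Lex[OF xm] by blast
  have d: "directed_in maxD ml (wb_down maxD ml x)"
    unfolding directed_in_def
  proof (intro conjI ballI)
    show "wb_down maxD ml x \<subseteq> maxD" unfolding wb_down_def by auto
    show "wb_down maxD ml x \<noteq> {}" using L1 dL unfolding directed_in_def by auto
  next
    fix a b assume a: "a \<in> wb_down maxD ml x" and b: "b \<in> wb_down maxD ml x"
    have wa: "way_below_in maxD ml a x" and wb: "way_below_in maxD ml b x"
      using a b unfolding wb_down_def by auto
    obtain t1 where t1: "t1 \<in> lft ` S" "ml a t1" using wa dL sL ml_refl[OF xm] unfolding way_below_in_def by blast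
    obtain t2 where t2: "t2 \<in> lft ` S" "ml b t2" using wb dL sL ml_refl[OF xm] unfolding way_below_in_def by blast
    obtain t3 where t3: "t3 \<in> lft ` S" "ml t1 t3" "ml t2 t3" using dL t1 t2 unfolding directed_in_def by blast
    have "t3 \<in> wb_down maxD ml x" using t3(1) L1 by blast
    moreover have "ml a t3" by (rule ml_trans[OF t1(2) t3(2)])
    moreover have "ml b t3" by (rule ml_trans[OF t2(2) t3(3)])
    ultimately show "\<exists>c\<in>wb_down maxD ml x. ml a c \<and> ml b c" by blast
  qed
  have s: "is_sup_in maxD ml (wb_down maxD ml x) x"
    unfolding is_sup_in_def
  proof (intro conjI ballI impI)
    show "x \<in> maxD" by (rule xm)
    fix a assume "a \<in> wb_down maxD ml x" then show "ml a x"
      using wb_le[OF poset_ml xm] unfolding wb_down_def by auto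
  next
    fix u assume u: "u \<in> maxD" "\<forall>a\<in>wb_down maxD ml x. ml a u"
    then have "\<forall>a\<in>lft ` S. ml a u" using L1 by blast
    moreover have "\<forall>v\<in>maxD. (\<forall>a\<in>lft ` S. ml a v) \<longrightarrow> ml x v" using sL unfolding is_sup_in_def by blast
    ultimately show "ml x u" using u(1) by blast
  qed
  show ?thesis using d s by blast
qed

lemma P3:
  assumes xm: "x \<in> maxD"
  shows "filtered_in maxD ml (wb_up maxD ml x) \<and> is_inf_in maxD ml (wb_up maxD ml x) x"
proof -
  obtain R where R1: "R \<subseteq> wb_up maxD ml x" and fR: "filtered_in maxD ml R"
    and iR: "is_inf_in maxD ml R x" and K3: "\<forall>b\<in>maxD. way_below_in maxD ml x b \<longrightarrow> (\<exists>r\<in>R. ml r b)"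
    using Rex[OF xm] by blast
  have f: "filtered_in maxD ml (wb_up maxD ml x)"
    unfolding filtered_in_def
  proof (intro conjI ballI)
    show "wb_up maxD ml x \<subseteq> maxD" unfolding wb_up_def by auto
    show "wb_up maxD ml x \<noteq> {}" using R1 fR unfolding filtered_in_def by auto
  next
    fix a b assume a: "a \<in> wb_up maxD ml x" and b: "b \<in> wb_up maxD ml x"
    obtain r1 where r1: "r1 \<in> R" "ml r1 a" using K3 a unfolding wb_up_def by blast
    obtain r2 where r2: "r2 \<in> R" "ml r2 b" using K3 b unfolding wb_up_def by blast
    obtain r3 where r3: "r3 \<in> R" "ml r3 r1" "ml r3 r2" using fR r1 r2 unfolding filtered_in_def by blast
    have "r3 \<in> wb_up maxD ml x" using r3(1) R1 by blast
    moreover have "ml r3 a" by (rule ml_trans[OF r3(2) r1(2)])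
    moreover have "ml r3 b" by (rule ml_trans[OF r3(3) r2(2)])
    ultimately show "\<exists>c\<in>wb_up maxD ml x. ml c a \<and> ml c b" by blast
  qed
  have i: "is_inf_in maxD ml (wb_up maxD ml x) x"
    unfolding is_inf_in_def
  proof (intro conjI ballI impI)
    show "x \<in> maxD" by (rule xm)
    fix a assume "a \<in> wb_up maxD ml x" then show "ml x a"
      using wb_le[OF poset_ml] unfolding wb_up_def by auto
  next
    fix u assume u: "u \<in> maxD" "\<forall>a\<in>wb_up maxD ml x. ml u a"
    then have "\<forall>a\<in>R. ml u a" using R1 by blast
    moreover have "\<forall>v\<in>maxD. (\<forall>a\<in>R. ml v a) \<longrightarrow> ml v x" using iR unfolding is_inf_in_def by blast
    ultimately show "ml u x" using u(1) by blast
  qed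
  show ?thesis using f i by blast
qed

lemma P2:
  assumes am: "a \<in> maxD" and bm: "b \<in> maxD"
  shows "way_below_in maxD ml a b \<longleftrightarrow>
     (\<forall>S i. filtered_in maxD ml S \<and> is_inf_in maxD ml S i \<and> ml i a \<longrightarrow> (\<exists>s\<in>S. ml s b))"
  using bic1[OF am bm] bic2[OF am bm] by blast

lemma P4: "bicontinuous_poset maxD ml"
  unfolding bicontinuous_poset_def continuous_poset_def
proof (intro conjI)
  show "poset_on maxD ml" by (rule poset_ml)
  show "\<exists>B\<subseteq>maxD. \<forall>x\<in>maxD. \<exists>S. S \<subseteq> B \<inter> wb_down maxD ml x \<and> directed_in maxD ml S \<and> is_sup_in maxD ml S x"
  proof (rule exI[of _ maxD], intro conjI ballI)
    show "maxD \<subseteq> maxD" by simp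
    fix x :: 'a assume xm: "x \<in> maxD"
    have "wb_down maxD ml x \<subseteq> maxD \<inter> wb_down maxD ml x" unfolding wb_down_def by blast
    then show "\<exists>S. S \<subseteq> maxD \<inter> wb_down maxD ml x \<and> directed_in maxD ml S \<and> is_sup_in maxD ml S x"
      using P1[OF xm] by blast
  qed
  show "\<forall>x\<in>maxD. \<forall>y\<in>maxD. way_below_in maxD ml x y \<longleftrightarrow>
        (\<forall>S i. filtered_in maxD ml S \<and> is_inf_in maxD ml S i \<and> ml i x \<longrightarrow> (\<exists>s\<in>S. ml s y))"
    using P2 by (intro ballI) (rule P2)
  show "\<forall>x\<in>maxD. filtered_in maxD ml (wb_up maxD ml x) \<and> is_inf_in maxD ml (wb_up maxD ml x) x"
    using P3 by blast
qed

end

theorem mainTheorem12: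
  fixes lft rgt :: "'a::order \<Rightarrow> 'a"
  assumes "interval_domain lft rgt"
  shows "(\<forall>x\<in>maxD. directed_in maxD (maxle lft rgt) (wb_down maxD (maxle lft rgt) x) \<and>
                   is_sup_in maxD (maxle lft rgt) (wb_down maxD (maxle lft rgt) x) x)
       \<and> (\<forall>a\<in>maxD. \<forall>b\<in>maxD. way_below_in maxD (maxle lft rgt) a b \<longleftrightarrow>
             (\<forall>S i. filtered_in maxD (maxle lft rgt) S \<and> is_inf_in maxD (maxle lft rgt) S i
                    \<and> maxle lft rgt i a \<longrightarrow> (\<exists>s\<in>S. maxle lft rgt s b)))
       \<and> (\<forall>x\<in>maxD. filtered_in maxD (maxle lft rgt) (wb_up maxD (maxle lft rgt) x) \<and>
                   is_inf_in maxD (maxle lft rgt) (wb_up maxD (maxle lft rgt) x) x)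
       \<and> bicontinuous_poset maxD (maxle lft rgt)"
proof -
  interpret IDom lft rgt by (rule IDom.intro) (rule assms)
  show ?thesis
  proof (intro conjI ballI)
    fix x :: 'a assume "x \<in> maxD" then show "directed_in maxD ml (wb_down maxD ml x)" using P1 by blast
  next
    fix x :: 'a assume "x \<in> maxD" then show "is_sup_in maxD ml (wb_down maxD ml x) x" using P1 by blast
  next
    fix a b :: 'a assume "a \<in> maxD" "b \<in> maxD"
    then show "way_below_in maxD ml a b \<longleftrightarrow>
             (\<forall>S i. filtered_in maxD ml S \<and> is_inf_in maxD ml S i \<and> ml i a \<longrightarrow> (\<exists>s\<in>S. ml s b))"
      by (rule P2)
  next
    fix x :: 'a assume "x \<in> maxD" then show "filtered_in maxD ml (wb_up maxD ml x)" using P3 by blast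
  next
    fix x :: 'a assume "x \<in> maxD" then show "is_inf_in maxD ml (wb_up maxD ml x) x" using P3 by blast
  next
    show "bicontinuous_poset maxD ml" by (rule P4)
  qed
qed


end
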